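(* For any $k\geq1$, the maps $\Delta_\prec,\Delta_\succ$ endow $\mathbf{PM}_k^+$ with a codendriform coalgebra structure: for every $x\in\mathbf{PM}_k^+$, $\Delta(x)=\mathbf{F}_\emptyset\otimes x+\Delta_\prec(x)+\Delta_\succ(x)+x\otimes\mathbf{F}_\emptyset$, and, with $\bar\Delta=\Delta_\prec+\Delta_\succ$ and $I$ the identity, $(\Delta_\prec\otimes I)\circ\Delta_\prec=(I\otimes\bar\Delta)\circ\Delta_\prec$, $(\Delta_\succ\otimes I)\circ\Delta_\prec=(I\otimes\Delta_\prec)\circ\Delta_\succ$, $(\bar\Delta\otimes I)\circ\Delta_\succ=(I\otimes\Delta_\succ)\circ\Delta_\succ$ on $\mathbf{PM}_k^+$.
   Context: $A_k=\{0,\dots,k\}$. A $k$-packed matrix of size $n$ is an $n\times n$ matrix over $A_k$ with a nonzero entry in each row and column ($\emptyset$ of size 0). $\operatorname{cp}(N)$ deletes the null rows and null columns of $N$. A column decomposition $M=L\bullet R$ of a $k$-packed $M$ of size $n$ is a writing $M=[L\mid R]$ with $L$ the first $j$ columns and $R$ the last $n-j$ columns ($0\le j\le n$) such that $\operatorname{cp}(L),\operatorname{cp}(R)$ are square. $\mathbf{PM}_k$ is the vector space with basis $(\mathbf{F}_M)$ and coproduct $\Delta(\mathbf{F}_M)=\sum_{M=L\bullet R}\mathbf{F}_{\operatorname{cp}(L)}\otimes\mathbf{F}_{\operatorname{cp}(R)}$; $\mathbf{PM}_k^+$ is the span of $\mathbf{F}_M$, $M\neq\emptyset$. For nonempty $M$,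 $\Delta_\prec(\mathbf{F}_M)$ (resp. $\Delta_\succ(\mathbf{F}_M)$) is the sum of $\mathbf{F}_{\operatorname{cp}(L)}\otimes\mathbf{F}_{\operatorname{cp}(R)}$ over column decompositions $M=L\bullet R$ in which $L$ and $R$ each have at least one column and the nonzero entries of the last row of $M$ lie in $L$ (resp. in $R$); extended linearly. *)

theory Defs
  imports Main "HOL-Library.Poly_Mapping"
begin

text \<open>Matrices are lists of rows (entries in nat).
The empty list is the empty matrix of size 0.\<close>

type_synonym mat = "nat list list"

definition packed :: "nat \<Rightarrow> mat \<Rightarrow> bool" where
  "packed k M \<longleftrightarrow>
     (\<forall>r\<in>set M. length r = length M \<and> (\<forall>e\<in>set r. e \<le> k) \<and> (\<exists>e\<in>set r. e \<noteq> 0)) \<and>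
     (\<forall>j<length M. \<exists>i<length M. M ! i ! j \<noteq> 0)"

definition cp :: "mat \<Rightarrow> mat" where
  "cp N = map (\<lambda>r. nths r {j. \<exists>r'\<in>set N. j < length r' \<and> r' ! j \<noteq> 0})
              (filter (\<lambda>r. \<exists>e\<in>set r. e \<noteq> 0) N)"

definition is_square :: "mat \<Rightarrow> bool" where
  "is_square A \<longleftrightarrow> (\<forall>r\<in>set A. length r = length A)"

definition lpart :: "nat \<Rightarrow> mat \<Rightarrow> mat" where "lpart j M = map (take j) M"
definition rpart :: "nat \<Rightarrow> mat \<Rightarrow> mat" where "rpart j M = map (drop j) M"

definition col_dec :: "mat \<Rightarrow> nat \<Rightarrow> bool" where
  "col_dec M j \<longleftrightarrow> j \<le> length M \<and> is_square (cp (lpart j M)) \<and> is_square (cp (rpart j M))"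

text \<open>Formal linear combinations: finitely supported coefficient functions.\<close>
definition F :: "mat \<Rightarrow> (mat \<Rightarrow>\<^sub>0 'a::field)" where
  "F M = Poly_Mapping.single M 1"

definition F2 :: "mat \<Rightarrow> mat \<Rightarrow> (mat \<times> mat \<Rightarrow>\<^sub>0 'a::field)" where
  "F2 A B = Poly_Mapping.single (A, B) 1"

definition lext :: "('b \<Rightarrow> ('c \<Rightarrow>\<^sub>0 'a::field)) \<Rightarrow> ('b \<Rightarrow>\<^sub>0 'a) \<Rightarrow> ('c \<Rightarrow>\<^sub>0 'a)" where
  "lext f x = (\<Sum>m\<in>Poly_Mapping.keys x. Poly_Mapping.map (\<lambda>c. Poly_Mapping.lookup x m * c) (f m))"

definition tens :: "(mat \<Rightarrow>\<^sub>0 'a::field) \<Rightarrow> (mat \<Rightarrow>\<^sub>0 'a) \<Rightarrow> (mat \<times> mat \<Rightarrow>\<^sub>0 'a)" where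
  "tens u v = (\<Sum>a\<in>Poly_Mapping.keys u. \<Sum>b\<in>Poly_Mapping.keys v. Poly_Mapping.single (a, b) (Poly_Mapping.lookup u a * Poly_Mapping.lookup v b))"

definition Delta_b :: "mat \<Rightarrow> (mat \<times> mat \<Rightarrow>\<^sub>0 'a::field)" where
  "Delta_b M = (\<Sum>j\<in>{j. col_dec M j}. F2 (cp (lpart j M)) (cp (rpart j M)))"

definition Delta_prec_b :: "mat \<Rightarrow> (mat \<times> mat \<Rightarrow>\<^sub>0 'a::field)" where
  "Delta_prec_b M = (\<Sum>j\<in>{j. col_dec M j \<and> 1 \<le> j \<and> j < length M
        \<and> (\<forall>e\<in>set (drop j (last M)). e = 0)}. F2 (cp (lpart j M)) (cp (rpart j M)))"

definition Delta_succ_b :: "mat \<Rightarrow> (mat \<times> mat \<Rightarrow>\<^sub>0 'a::field)" where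
  "Delta_succ_b M = (\<Sum>j\<in>{j. col_dec M j \<and> 1 \<le> j \<and> j < length M
        \<and> (\<forall>e\<in>set (take j (last M)). e = 0)}. F2 (cp (lpart j M)) (cp (rpart j M)))"

definition Delta :: "(mat \<Rightarrow>\<^sub>0 'a::field) \<Rightarrow> (mat \<times> mat \<Rightarrow>\<^sub>0 'a)" where
  "Delta = lext Delta_b"
definition Delta_prec :: "(mat \<Rightarrow>\<^sub>0 'a::field) \<Rightarrow> (mat \<times> mat \<Rightarrow>\<^sub>0 'a)" where
  "Delta_prec = lext Delta_prec_b"
definition Delta_succ :: "(mat \<Rightarrow>\<^sub>0 'a::field) \<Rightarrow> (mat \<times> mat \<Rightarrow>\<^sub>0 'a)" where
  "Delta_succ = lext Delta_succ_b"
definition Delta_bar :: "(mat \<Rightarrow>\<^sub>0 'a::field) \<Rightarrow> (mat \<times> mat \<Rightarrow>\<^sub>0 'a)" where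
  "Delta_bar x = Delta_prec x + Delta_succ x"

definition tensor_I :: "((mat \<Rightarrow>\<^sub>0 'a::field) \<Rightarrow> (mat \<times> mat \<Rightarrow>\<^sub>0 'a))
    \<Rightarrow> (mat \<times> mat \<Rightarrow>\<^sub>0 'a) \<Rightarrow> (mat \<times> mat \<times> mat \<Rightarrow>\<^sub>0 'a)" where
  "tensor_I f = lext (\<lambda>(A, B). \<Sum>pq\<in>Poly_Mapping.keys (f (F A)).
       Poly_Mapping.single (fst pq, snd pq, B) (Poly_Mapping.lookup (f (F A)) pq))"

definition I_tensor :: "((mat \<Rightarrow>\<^sub>0 'a::field) \<Rightarrow> (mat \<times> mat \<Rightarrow>\<^sub>0 'a))
    \<Rightarrow> (mat \<times> mat \<Rightarrow>\<^sub>0 'a) \<Rightarrow> (mat \<times> mat \<times> mat \<Rightarrow>\<^sub>0 'a)" where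
  "I_tensor f = lext (\<lambda>(A, B). \<Sum>qr\<in>Poly_Mapping.keys (f (F B)).
       Poly_Mapping.single (A, fst qr, snd qr) (Poly_Mapping.lookup (f (F B)) qr))"

definition PMplus :: "nat \<Rightarrow> (mat \<Rightarrow>\<^sub>0 'a::field) set" where
  "PMplus k = {x. \<forall>M\<in>Poly_Mapping.keys x. packed k M \<and> M \<noteq> []}"

end

theory Submission
  imports Defs
begin

lemma lookup_map_mult [simp]:
  "Poly_Mapping.lookup (Poly_Mapping.map (\<lambda>d. (c::'a::field) * d) p) k = c * Poly_Mapping.lookup p k"
  by (simp add: map.rep_eq when_def)

lemma map_mult_1 [simp]: "Poly_Mapping.map (\<lambda>d. (1::'a::field) * d) p = p"
  by (rule poly_mapping_eqI) (simp add: map.rep_eq when_def)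

lemma lookup_lext:
  "Poly_Mapping.lookup (lext g x) t = (\<Sum>m\<in>Poly_Mapping.keys x. Poly_Mapping.lookup x m * Poly_Mapping.lookup (g m) t)"
  unfolding lext_def by (simp add: lookup_sum)

lemma sum_keys_ext:
  assumes "finite S" "Poly_Mapping.keys x \<subseteq> S"
  shows "(\<Sum>m\<in>Poly_Mapping.keys x. Poly_Mapping.lookup x m * (c m :: 'a::field)) = (\<Sum>m\<in>S. Poly_Mapping.lookup x m * c m)"
  using assms by (intro sum.mono_neutral_left) (auto simp: in_keys_iff)

lemma lext_add: "lext g (u + v) = lext g u + lext g v"
proof (rule poly_mapping_eqI)
  fix t
  let ?S = "Poly_Mapping.keys u \<union> Poly_Mapping.keys v"
  have f: "finite ?S" by simp
  have "Poly_Mapping.lookup (lext g (u+v)) t = (\<Sum>m\<in>?S. Poly_Mapping.lookup (u+v) m * Poly_Mapping.lookup (g m) t)"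
    unfolding lookup_lext by (rule sum_keys_ext[OF f]) (rule keys_add)
  also have "\<dots> = (\<Sum>m\<in>?S. Poly_Mapping.lookup u m * Poly_Mapping.lookup (g m) t) + (\<Sum>m\<in>?S. Poly_Mapping.lookup v m * Poly_Mapping.lookup (g m) t)"
    by (simp add: lookup_add distrib_right sum.distrib)
  also have "\<dots> = Poly_Mapping.lookup (lext g u) t + Poly_Mapping.lookup (lext g v) t"
    unfolding lookup_lext by (simp add: sum_keys_ext[OF f])
  finally show "Poly_Mapping.lookup (lext g (u + v)) t = Poly_Mapping.lookup (lext g u + lext g v) t"
    by (simp add: lookup_add)
qed

lemma lext_zero [simp]: "lext g 0 = 0"
  unfolding lext_def by simp

lemma lext_sum: "lext g (\<Sum>j\<in>J. h j) = (\<Sum>j\<in>J. lext g (h j))"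
proof (cases "finite J")
  case True
  then show ?thesis by (induction J rule: finite_induct) (auto simp: lext_add)
qed simp

lemma lext_single1: "lext g (Poly_Mapping.single m (1::'a::field)) = g m"
  unfolding lext_def by (simp add: map.rep_eq when_def)

lemma lext_F: "lext g (F m) = g m"
  unfolding F_def by (rule lext_single1)

lemma lext_fun_add: "lext (\<lambda>m. g m + h m) x = lext g x + lext h x"
  by (rule poly_mapping_eqI) (simp add: lookup_lext lookup_add distrib_left sum.distrib)

lemma lext_cong: "(\<And>m. m \<in> Poly_Mapping.keys x \<Longrightarrow> g m = h m) \<Longrightarrow> lext g x = lext h x"
  unfolding lext_def by (rule sum.cong) auto

lemma lext_smul: "lext g (Poly_Mapping.map (\<lambda>d. c * d) p) = Poly_Mapping.map (\<lambda>d. c * d) (lext g p)"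
proof (rule poly_mapping_eqI)
  fix t
  have sub: "Poly_Mapping.keys (Poly_Mapping.map (\<lambda>d. c * d) p) \<subseteq> Poly_Mapping.keys p"
    by (auto simp: in_keys_iff map.rep_eq when_def)
  have "Poly_Mapping.lookup (lext g (Poly_Mapping.map (\<lambda>d. c * d) p)) t
      = (\<Sum>m\<in>Poly_Mapping.keys p. Poly_Mapping.lookup (Poly_Mapping.map (\<lambda>d. c * d) p) m * Poly_Mapping.lookup (g m) t)"
    unfolding lookup_lext by (rule sum_keys_ext[OF _ sub]) simp
  also have "\<dots> = c * (\<Sum>m\<in>Poly_Mapping.keys p. Poly_Mapping.lookup p m * Poly_Mapping.lookup (g m) t)"
    by (simp add: sum_distrib_left mult.assoc)
  finally show "Poly_Mapping.lookup (lext g (Poly_Mapping.map (\<lambda>d. c * d) p)) t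
      = Poly_Mapping.lookup (Poly_Mapping.map (\<lambda>d. c * d) (lext g p)) t"
    by (simp add: lookup_lext)
qed

lemma lext_lext: "lext g (lext h x) = lext (\<lambda>m. lext g (h m)) x"
proof -
  have "lext g (lext h x) = lext g (\<Sum>m\<in>Poly_Mapping.keys x. Poly_Mapping.map (\<lambda>d. Poly_Mapping.lookup x m * d) (h m))"
    by (simp only: lext_def)
  also have "\<dots> = (\<Sum>m\<in>Poly_Mapping.keys x. Poly_Mapping.map (\<lambda>d. Poly_Mapping.lookup x m * d) (lext g (h m)))"
    by (simp only: lext_sum lext_smul)
  also have "\<dots> = lext (\<lambda>m. lext g (h m)) x" by (simp only: lext_def)
  finally show ?thesis .
qed

lemma V_as_lext:
  "(\<Sum>x\<in>Poly_Mapping.keys v. Poly_Mapping.single (h x) (Poly_Mapping.lookup v x)) = lext (\<lambda>x. Poly_Mapping.single (h x) (1::'a::field)) v"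
  unfolding lext_def by simp

lemma tensor_I_lext:
  "tensor_I f = lext (\<lambda>(A, B). lext (\<lambda>pq. Poly_Mapping.single (fst pq, snd pq, B) 1) (f (F A)))"
  unfolding tensor_I_def V_as_lext ..

lemma I_tensor_lext:
  "I_tensor f = lext (\<lambda>(A, B). lext (\<lambda>qr. Poly_Mapping.single (A, fst qr, snd qr) 1) (f (F B)))"
  unfolding I_tensor_def V_as_lext ..

section \<open>Combinatorics of packed matrices\<close>

definition nz :: "nat list \<Rightarrow> bool" where "nz r \<longleftrightarrow> (\<exists>e\<in>set r. e \<noteq> 0)"
definition slice :: "nat \<Rightarrow> nat \<Rightarrow> nat list \<Rightarrow> nat list" where
  "slice a b r = take (b - a) (drop a r)"
definition blk :: "nat \<Rightarrow> nat \<Rightarrow> mat \<Rightarrow> mat" where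
  "blk a b M = filter nz (map (slice a b) M)"
definition cnt :: "nat \<Rightarrow> nat \<Rightarrow> mat \<Rightarrow> nat" where
  "cnt a b M = length (blk a b M)"

lemma nz_append [simp]: "nz (xs @ ys) \<longleftrightarrow> nz xs \<or> nz ys"
  by (auto simp: nz_def)

lemma nz_Nil [simp]: "\<not> nz []" by (simp add: nz_def)

lemma length_slice: "b \<le> length r \<Longrightarrow> length (slice a b r) = b - a"
  by (simp add: slice_def)

lemma nth_slice: "a + c < b \<Longrightarrow> b \<le> length r \<Longrightarrow> slice a b r ! c = r ! (a + c)"
  by (simp add: slice_def)

lemma slice_slice: "b \<le> d - c \<Longrightarrow> slice a b (slice c d r) = slice (c + a) (c + b) r"
  by (simp add: slice_def drop_take min_def add.commute)

lemma set_slice: "set (slice a b r) \<subseteq> set r"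
  unfolding slice_def by (meson order_trans set_drop_subset set_take_subset)

lemma nz_slice_sub: "nz (slice a b r) \<Longrightarrow> nz r"
  using set_slice unfolding nz_def by blast

lemma slice_append: "a \<le> b \<Longrightarrow> b \<le> c \<Longrightarrow> slice a c r = slice a b r @ slice b c r"
proof -
  assume "a \<le> b" "b \<le> c"
  then have "slice a c r = take ((b - a) + (c - b)) (drop a r)" by (simp add: slice_def)
  also have "\<dots> = slice a b r @ slice b c r"
    unfolding take_add slice_def drop_drop using \<open>a \<le> b\<close> by simp
  finally show ?thesis .
qed

lemma slice_0 [simp]: "slice 0 j r = take j r" by (simp add: slice_def)

lemma slice_end: "length r = n \<Longrightarrow> slice j n r = drop j r"
  by (simp add: slice_def)

lemma slice_empty [simp]: "slice a a r = []" by (simp add: slice_def)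

lemma blk_empty [simp]: "blk a a M = []" by (simp add: blk_def)

lemma cnt_alt: "cnt a b M = length (filter (\<lambda>r. nz (slice a b r)) M)"
  by (simp add: cnt_def blk_def comp_def)

lemma packed_iff:
  "packed k M \<longleftrightarrow>
     (\<forall>r\<in>set M. length r = length M \<and> (\<forall>e\<in>set r. e \<le> k) \<and> nz r) \<and>
     (\<forall>j<length M. \<exists>r\<in>set M. r ! j \<noteq> 0)"
proof -
  have "\<And>j. (\<exists>i<length M. M ! i ! j \<noteq> 0) = (\<exists>r\<in>set M. r ! j \<noteq> 0)"
    by (metis in_set_conv_nth)
  then show ?thesis by (simp add: packed_def nz_def)
qed

lemma cp_full:
  assumes "\<forall>r\<in>set X. length r = w" "\<forall>c<w. \<exists>r\<in>set X. r ! c \<noteq> 0"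
  shows "cp X = filter nz X"
proof -
  have "\<And>r. r \<in> set X \<Longrightarrow> nths r {j. \<exists>r'\<in>set X. j < length r' \<and> r' ! j \<noteq> 0} = r"
    using assms by (intro nths_all) fastforce
  then show ?thesis unfolding cp_def nz_def[symmetric]
    by (intro map_idI) auto
qed


lemma K1:
  assumes "packed k N" "j \<le> length N"
  shows "cp (lpart j N) = blk 0 j N"
proof -
  have "lpart j N = map (slice 0 j) N" by (simp add: lpart_def)
  moreover have "cp (map (slice 0 j) N) = filter nz (map (slice 0 j) N)"
  proof (rule cp_full[where w = j])
    show "\<forall>r\<in>set (map (slice 0 j) N). length r = j" using assms by (auto simp: packed_iff)
    show "\<forall>c<j. \<exists>r\<in>set (map (slice 0 j) N). r ! c \<noteq> 0"
    proof (intro allI impI)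
      fix c assume "c < j"
      have col: "\<forall>j<length N. \<exists>r\<in>set N. r ! j \<noteq> 0" using assms(1) unfolding packed_iff by blast
      have "c < length N" using \<open>c < j\<close> assms by simp
      with col obtain r where "r \<in> set N" "r ! c \<noteq> 0" by blast
      then show "\<exists>r\<in>set (map (slice 0 j) N). r ! c \<noteq> 0" using \<open>c < j\<close>
        by (intro bexI[of _ "take j r"]) auto
    qed
  qed
  ultimately show ?thesis by (simp add: blk_def)
qed

lemma K2:
  assumes "packed k N" "j \<le> length N"
  shows "cp (rpart j N) = blk j (length N) N"
proof -
  have "rpart j N = map (slice j (length N)) N" using assms
    by (auto simp: rpart_def packed_iff slice_end intro!: map_cong)
  moreover have "cp (map (slice j (length N)) N) = filter nz (map (slice j (length N)) N)"
  proof (rule cp_full[where w = "length N - j"])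
    show "\<forall>r\<in>set (map (slice j (length N)) N). length r = length N - j"
      using assms by (auto simp: packed_iff length_slice)
    show "\<forall>c<length N - j. \<exists>r\<in>set (map (slice j (length N)) N). r ! c \<noteq> 0"
    proof (intro allI impI)
      fix c assume c: "c < length N - j"
      have col: "\<forall>j<length N. \<exists>r\<in>set N. r ! j \<noteq> 0" using assms(1) unfolding packed_iff by blast
      have "j + c < length N" using c by simp
      with col obtain r where r: "r \<in> set N" "r ! (j + c) \<noteq> 0" by blast
      then have "slice j (length N) r ! c = r ! (j + c)" using c assms
        by (intro nth_slice) (auto simp: packed_iff)
      then show "\<exists>r\<in>set (map (slice j (length N)) N). r ! c \<noteq> 0" using r
        by (intro bexI[of _ "slice j (length N) r"]) auto
    qed
  qed
  ultimately show ?thesis by (simp add: blk_def)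
qed

lemma nz_slice_mono: "b \<le> d - c \<Longrightarrow> nz (slice (c + a) (c + b) r) \<Longrightarrow> nz (slice c d r)"
  by (metis slice_slice nz_slice_sub)

lemma K4: "b \<le> d - c \<Longrightarrow> blk a b (blk c d N) = blk (c + a) (c + b) N"
  by (induction N) (auto simp: blk_def slice_slice dest: nz_slice_mono)

lemma cnt_K4: "b \<le> d - c \<Longrightarrow> cnt a b (blk c d N) = cnt (c + a) (c + b) N"
  by (simp add: cnt_def K4)



lemma length_filter_or:
  "length (filter P xs) + length (filter Q xs)
   = length (filter (\<lambda>x. P x \<or> Q x) xs) + length (filter (\<lambda>x. P x \<and> Q x) xs)"
  by (induction xs) auto

lemma K7:
  assumes "a \<le> b" "b \<le> c"
  shows "cnt a b N + cnt b c N = cnt a c N + length (filter (\<lambda>r. nz (slice a b r) \<and> nz (slice b c r)) N)"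
proof -
  have "filter (\<lambda>r. nz (slice a c r)) N = filter (\<lambda>r. nz (slice a b r) \<or> nz (slice b c r)) N"
    using assms by (simp add: slice_append[OF assms])
  then show ?thesis unfolding cnt_alt by (subst length_filter_or) simp
qed


lemma blk_full: "packed k N \<Longrightarrow> blk 0 (length N) N = N"
  unfolding blk_def
  by (auto simp: packed_iff intro!: filter_True map_idI)

lemma K8: "packed k N \<Longrightarrow> cnt 0 (length N) N = length N"
  by (simp add: cnt_def blk_full)

lemma blk_nonempty:
  assumes "packed k N" "a < b" "b \<le> length N"
  shows "blk a b N \<noteq> []"
proof -
  have col: "\<forall>j<length N. \<exists>r\<in>set N. r ! j \<noteq> 0" using assms(1) unfolding packed_iff by blast
  have "a < length N" using assms by simp
  with col obtain r where r: "r \<in> set N" "r ! a \<noteq> 0" by blast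
  have len: "length r = length N" using r assms by (auto simp: packed_iff)
  have "slice a b r ! 0 = r ! a" using assms len by (intro nth_slice[where c = 0, simplified]) auto
  moreover have "length (slice a b r) = b - a" using len assms by (simp add: length_slice)
  ultimately have "nz (slice a b r)" using r assms unfolding nz_def
    by (metis nth_mem zero_less_diff)
  then show ?thesis using r by (auto simp: blk_def filter_empty_conv)
qed

lemma rows_blk: "packed k N \<Longrightarrow> b \<le> length N \<Longrightarrow> r \<in> set (blk a b N) \<Longrightarrow> length r = b - a"
  by (auto simp: blk_def packed_iff length_slice)

lemma is_square_blk:
  assumes "packed k N" "a \<le> b" "b \<le> length N"
  shows "is_square (blk a b N) \<longleftrightarrow> cnt a b N = b - a"
proof (cases "a = b")
  case True then show ?thesis by (simp add: is_square_def cnt_def)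
next
  case False
  then have "blk a b N \<noteq> []" using blk_nonempty assms by simp
  then show ?thesis using rows_blk[OF assms(1,3)] unfolding is_square_def cnt_def
    by (metis last_in_set)
qed

lemma K3:
  assumes "packed k N"
  shows "col_dec N j \<longleftrightarrow> j \<le> length N \<and> cnt 0 j N = j \<and> cnt j (length N) N = length N - j"
  using assms by (auto simp: col_dec_def K1 K2 is_square_blk)

lemma blk_packed:
  assumes "packed k N" "a < b" "b \<le> length N" "cnt a b N = b - a"
  shows "packed k (blk a b N)" "blk a b N \<noteq> []" "length (blk a b N) = b - a"
proof -
  show "blk a b N \<noteq> []" using blk_nonempty assms by simp
  show len: "length (blk a b N) = b - a" using assms by (simp add: cnt_def)
  have rows: "\<forall>r\<in>set (blk a b N). length r = length (blk a b N) \<and> (\<forall>e\<in>set r. e \<le> k) \<and> nz r"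
  proof
    fix r assume r: "r \<in> set (blk a b N)"
    from r obtain r0 where r0: "r0 \<in> set N" "r = slice a b r0" "nz r" by (auto simp: blk_def)
    have "\<forall>e\<in>set r0. e \<le> k" using assms(1) r0(1) unfolding packed_iff by blast
    then have "\<forall>e\<in>set r. e \<le> k" using r0(2) set_slice by blast
    moreover have "length r = length (blk a b N)" using rows_blk assms len r by auto
    ultimately show "length r = length (blk a b N) \<and> (\<forall>e\<in>set r. e \<le> k) \<and> nz r"
      using r0 by blast
  qed
  have cols: "\<forall>c<length (blk a b N). \<exists>r\<in>set (blk a b N). r ! c \<noteq> 0"
  proof (intro allI impI)
    fix c assume c: "c < length (blk a b N)"
    have col: "\<forall>j<length N. \<exists>r\<in>set N. r ! j \<noteq> 0" using assms(1) unfolding packed_iff by blast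
    have "a + c < length N" using c len assms by simp
    with col obtain r where r: "r \<in> set N" "r ! (a + c) \<noteq> 0" by blast
    have lr: "length r = length N" using assms(1) r(1) unfolding packed_iff by blast
    have e: "slice a b r ! c = r ! (a + c)" using c len assms lr by (intro nth_slice) auto
    moreover have "length (slice a b r) = b - a" using assms lr by (simp add: length_slice)
    ultimately have "nz (slice a b r)" using r c len unfolding nz_def by (metis nth_mem)
    then show "\<exists>r\<in>set (blk a b N). r ! c \<noteq> 0" using r e
      by (intro bexI[of _ "slice a b r"]) (auto simp: blk_def)
  qed
  show "packed k (blk a b N)" unfolding packed_iff using rows cols by blast
qed

lemma last_blk:
  assumes "N \<noteq> []" "nz (slice a b (last N))"
  shows "last (blk a b N) = slice a b (last N)"
proof -
  obtain ys y where "N = ys @ [y]" using assms(1) by (metis rev_exhaust)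
  then show ?thesis using assms by (simp add: blk_def)
qed

section \<open>Reduction to sums over pairs\<close>

definition D :: "(nat \<Rightarrow> nat list \<Rightarrow> bool) \<Rightarrow> mat \<Rightarrow> (mat \<times> mat \<Rightarrow>\<^sub>0 'a::field)" where
  "D P M = (\<Sum>j\<in>{j. col_dec M j \<and> 1 \<le> j \<and> j < length M \<and> P j (last M)}. F2 (cp (lpart j M)) (cp (rpart j M)))"

lemma D_blk:
  assumes "packed k M"
  shows "D P M = (\<Sum>j\<in>{j. 1 \<le> j \<and> j < length M \<and> cnt 0 j M = j \<and> cnt j (length M) M = length M - j \<and> P j (last M)}.
                   F2 (blk 0 j M) (blk j (length M) M))"
  unfolding D_def
proof (rule sum.cong)
  show "{j. col_dec M j \<and> 1 \<le> j \<and> j < length M \<and> P j (last M)} =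
        {j. 1 \<le> j \<and> j < length M \<and> cnt 0 j M = j \<and> cnt j (length M) M = length M - j \<and> P j (last M)}"
    by (auto simp: K3[OF assms])
  show "\<And>j. j \<in> {j. 1 \<le> j \<and> j < length M \<and> cnt 0 j M = j \<and> cnt j (length M) M = length M - j \<and> P j (last M)} \<Longrightarrow>
         F2 (cp (lpart j M)) (cp (rpart j M)) = F2 (blk 0 j M) (blk j (length M) M)"
    using K1[OF assms] K2[OF assms] by simp
qed

lemma cnt_comb:
  assumes "packed k M" "i \<le> j" "j \<le> length M" "cnt 0 i M = i" "cnt i j M = j - i"
    "cnt j (length M) M = length M - j"
  shows "cnt 0 j M = j" "cnt i (length M) M = length M - i"
proof -
  have a: "cnt 0 i M + cnt i j M = cnt 0 j M + length (filter (\<lambda>r. nz (slice 0 i r) \<and> nz (slice i j r)) M)"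
    using K7[of 0 i j M] assms by simp
  have b: "cnt 0 j M + cnt j (length M) M = cnt 0 (length M) M + length (filter (\<lambda>r. nz (slice 0 j r) \<and> nz (slice j (length M) r)) M)"
    using K7[of 0 j "length M" M] assms by simp
  have c: "cnt i j M + cnt j (length M) M = cnt i (length M) M + length (filter (\<lambda>r. nz (slice i j r) \<and> nz (slice j (length M) r)) M)"
    using K7[of i j "length M" M] assms by simp
  have d: "cnt 0 i M + cnt i (length M) M = cnt 0 (length M) M + length (filter (\<lambda>r. nz (slice 0 i r) \<and> nz (slice i (length M) r)) M)"
    using K7[of 0 i "length M" M] assms by simp
  have e: "cnt 0 (length M) M = length M" using K8[OF assms(1)] .
  show "cnt 0 j M = j" using a b e assms by linarith
  show "cnt i (length M) M = length M - i" using c d e assms by linarith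
qed

lemma sum_swap_pairs:
  assumes "finite A" "\<And>j. j \<in> A \<Longrightarrow> finite (B j)"
  shows "(\<Sum>j\<in>A. \<Sum>i\<in>B j. g i j) = (\<Sum>p\<in>{(i,j). j \<in> A \<and> i \<in> B j}. g (fst p) (snd p))"
proof -
  have "(\<Sum>j\<in>A. \<Sum>i\<in>B j. g i j) = (\<Sum>q\<in>Sigma A B. g (snd q) (fst q))"
    using sum.Sigma[OF assms(1), of B "\<lambda>j i. g i j"] assms(2) by (simp add: split_def)
  also have "\<dots> = (\<Sum>p\<in>{(i,j). j \<in> A \<and> i \<in> B j}. g (fst p) (snd p))"
    by (rule sum.reindex_bij_witness[where i=prod.swap and j=prod.swap]) auto
  finally show ?thesis .
qed

lemma tensor_I_D:
  fixes f :: "(mat \<Rightarrow>\<^sub>0 'a::field) \<Rightarrow> (mat \<times> mat \<Rightarrow>\<^sub>0 'a)"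
  assumes M: "packed k M" "M \<noteq> []"
    and f: "\<forall>A. packed k A \<and> A \<noteq> [] \<longrightarrow> f (F A) = D P A"
  shows "tensor_I f (D Q M) = (\<Sum>p\<in>{(i,j). 1 \<le> i \<and> i < j \<and> j < length M \<and> cnt 0 i M = i \<and> cnt i j M = j - i
          \<and> cnt j (length M) M = length M - j \<and> Q j (last M) \<and> P i (last (blk 0 j M))}.
          Poly_Mapping.single (blk 0 (fst p) M, blk (fst p) (snd p) M, blk (snd p) (length M) M) (1::'a))"
proof -
  define n where "n = length M"
  define JQ where "JQ = {j. 1 \<le> j \<and> j < n \<and> cnt 0 j M = j \<and> cnt j n M = n - j \<and> Q j (last M)}"
  define B where "B j = {i. 1 \<le> i \<and> i < j \<and> cnt 0 i M = i \<and> cnt i j M = j - i \<and> P i (last (blk 0 j M))}" for j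
  have inner: "f (F (blk 0 j M)) = (\<Sum>i\<in>B j. F2 (blk 0 i M) (blk i j M))" if j: "j \<in> JQ" for j
  proof -
    have L: "packed k (blk 0 j M)" "blk 0 j M \<noteq> []" "length (blk 0 j M) = j"
      using blk_packed[of k M 0 j] j M by (auto simp: JQ_def n_def)
    have "f (F (blk 0 j M)) = D P (blk 0 j M)" using f L by blast
    also have "\<dots> = (\<Sum>i\<in>{i. 1 \<le> i \<and> i < j \<and> cnt 0 i (blk 0 j M) = i \<and> cnt i j (blk 0 j M) = j - i \<and> P i (last (blk 0 j M))}.
        F2 (blk 0 i (blk 0 j M)) (blk i j (blk 0 j M)))"
      using D_blk[OF L(1), of P] L(3) by simp
    also have "\<dots> = (\<Sum>i\<in>B j. F2 (blk 0 i M) (blk i j M))"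
      by (intro sum.cong) (auto simp: B_def cnt_K4 K4)
    finally show ?thesis .
  qed
  have fin: "finite JQ" "\<And>j. finite (B j)"
    by (rule finite_subset[of _ "{..<n}"], auto simp: JQ_def)
       (rule finite_subset[of _ "{..<j}" for j], auto simp: B_def)
  have "tensor_I f (D Q M) = tensor_I f (\<Sum>j\<in>JQ. F2 (blk 0 j M) (blk j n M))"
    by (simp only: D_blk[OF M(1)] JQ_def n_def)
  also have "\<dots> = (\<Sum>j\<in>JQ. lext (\<lambda>pq. Poly_Mapping.single (fst pq, snd pq, blk j n M) 1) (f (F (blk 0 j M))))"
    by (simp add: tensor_I_lext lext_sum F2_def lext_single1)
  also have "\<dots> = (\<Sum>j\<in>JQ. \<Sum>i\<in>B j. Poly_Mapping.single (blk 0 i M, blk i j M, blk j n M) 1)"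
    by (intro sum.cong refl) (simp add: inner lext_sum F2_def lext_single1)
  also have "\<dots> = (\<Sum>p\<in>{(i,j). j \<in> JQ \<and> i \<in> B j}. Poly_Mapping.single (blk 0 (fst p) M, blk (fst p) (snd p) M, blk (snd p) n M) 1)"
    by (rule sum_swap_pairs[OF fin])
  also have "{(i,j). j \<in> JQ \<and> i \<in> B j} = {(i,j). 1 \<le> i \<and> i < j \<and> j < length M \<and> cnt 0 i M = i \<and> cnt i j M = j - i
          \<and> cnt j (length M) M = length M - j \<and> Q j (last M) \<and> P i (last (blk 0 j M))}"
    (is "?A = ?B")
  proof
    show "?A \<subseteq> ?B" by (auto simp: JQ_def B_def n_def)
    show "?B \<subseteq> ?A"
    proof
      fix p assume "p \<in> ?B"
      then obtain i j where p: "p = (i,j)" and asm: "1 \<le> i" "i < j" "j < length M" "cnt 0 i M = i"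
        "cnt i j M = j - i" "cnt j (length M) M = length M - j" "Q j (last M)" "P i (last (blk 0 j M))"
        by blast
      then have "cnt 0 j M = j" using cnt_comb(1)[OF M(1), of i j] by simp
      then show "p \<in> ?A" using asm p by (simp add: JQ_def B_def n_def)
    qed
  qed
  finally show ?thesis by (simp add: n_def)
qed

lemma I_tensor_D:
  fixes f :: "(mat \<Rightarrow>\<^sub>0 'a::field) \<Rightarrow> (mat \<times> mat \<Rightarrow>\<^sub>0 'a)"
  assumes M: "packed k M" "M \<noteq> []"
    and f: "\<forall>A. packed k A \<and> A \<noteq> [] \<longrightarrow> f (F A) = D P A"
  shows "I_tensor f (D Q M) = (\<Sum>p\<in>{(i,j). 1 \<le> i \<and> i < j \<and> j < length M \<and> cnt 0 i M = i \<and> cnt i j M = j - i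
          \<and> cnt j (length M) M = length M - j \<and> Q i (last M) \<and> P (j - i) (last (blk i (length M) M))}.
          Poly_Mapping.single (blk 0 (fst p) M, blk (fst p) (snd p) M, blk (snd p) (length M) M) (1::'a))"
proof -
  define n where "n = length M"
  define JQ where "JQ = {i. 1 \<le> i \<and> i < n \<and> cnt 0 i M = i \<and> cnt i n M = n - i \<and> Q i (last M)}"
  define B where "B i = {j'. 1 \<le> j' \<and> j' < n - i \<and> cnt i (i + j') M = j' \<and> cnt (i + j') n M = n - i - j'
     \<and> P j' (last (blk i n M))}" for i
  have inner: "f (F (blk i n M)) = (\<Sum>j'\<in>B i. F2 (blk i (i + j') M) (blk (i + j') n M))" if i: "i \<in> JQ" for i
  proof -
    have R: "packed k (blk i n M)" "blk i n M \<noteq> []" "length (blk i n M) = n - i"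
      using blk_packed[of k M i n] i M by (auto simp: JQ_def n_def)
    have ni: "i + (n - i) = n" using i by (simp add: JQ_def)
    have "f (F (blk i n M)) = D P (blk i n M)" using f R by blast
    also have "\<dots> = (\<Sum>j'\<in>{j'. 1 \<le> j' \<and> j' < n - i \<and> cnt 0 j' (blk i n M) = j' \<and> cnt j' (n - i) (blk i n M) = n - i - j'
         \<and> P j' (last (blk i n M))}. F2 (blk 0 j' (blk i n M)) (blk j' (n - i) (blk i n M)))"
      using D_blk[OF R(1), of P] R(3) by simp
    also have "\<dots> = (\<Sum>j'\<in>B i. F2 (blk i (i + j') M) (blk (i + j') n M))"
      by (intro sum.cong) (auto simp: B_def cnt_K4 K4 ni)
    finally show ?thesis .
  qed
  have fin: "finite JQ" "\<And>i. i \<in> JQ \<Longrightarrow> finite (B i)"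
    by (rule finite_subset[of _ "{..<n}"], auto simp: JQ_def)
       (rule finite_subset[of _ "{..<n}"], auto simp: B_def)
  have "I_tensor f (D Q M) = I_tensor f (\<Sum>i\<in>JQ. F2 (blk 0 i M) (blk i n M))"
    by (simp only: D_blk[OF M(1)] JQ_def n_def)
  also have "\<dots> = (\<Sum>i\<in>JQ. lext (\<lambda>qr. Poly_Mapping.single (blk 0 i M, fst qr, snd qr) 1) (f (F (blk i n M))))"
    by (simp add: I_tensor_lext lext_sum F2_def lext_single1)
  also have "\<dots> = (\<Sum>i\<in>JQ. \<Sum>j'\<in>B i. Poly_Mapping.single (blk 0 i M, blk i (i + j') M, blk (i + j') n M) 1)"
    by (intro sum.cong refl) (simp add: inner lext_sum F2_def lext_single1)
  also have "\<dots> = (\<Sum>q\<in>Sigma JQ B. Poly_Mapping.single (blk 0 (fst q) M, blk (fst q) (fst q + snd q) M, blk (fst q + snd q) n M) 1)"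
    using sum.Sigma[OF fin(1), of B "\<lambda>i j'. Poly_Mapping.single (blk 0 i M, blk i (i + j') M, blk (i + j') n M) (1::'a)"] fin(2)
    by (simp add: split_def)
  also have "\<dots> = (\<Sum>p\<in>{(i,j). 1 \<le> i \<and> i < j \<and> j < length M \<and> cnt 0 i M = i \<and> cnt i j M = j - i
          \<and> cnt j (length M) M = length M - j \<and> Q i (last M) \<and> P (j - i) (last (blk i (length M) M))}.
          Poly_Mapping.single (blk 0 (fst p) M, blk (fst p) (snd p) M, blk (snd p) (length M) M) (1::'a))"
  proof (rule sum.reindex_bij_witness[where i="\<lambda>p. (fst p, snd p - fst p)" and j="\<lambda>q. (fst q, fst q + snd q)"])
    fix q assume "q \<in> Sigma JQ B"
    then show "(fst (fst q, fst q + snd q), snd (fst q, fst q + snd q) - fst (fst q, fst q + snd q)) = q"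
      by auto
  next
    fix q assume "q \<in> Sigma JQ B"
    then show "(fst q, fst q + snd q) \<in> {(i,j). 1 \<le> i \<and> i < j \<and> j < length M \<and> cnt 0 i M = i \<and> cnt i j M = j - i
          \<and> cnt j (length M) M = length M - j \<and> Q i (last M) \<and> P (j - i) (last (blk i (length M) M))}"
      by (auto simp: JQ_def B_def n_def)
  next
    fix p assume "p \<in> {(i,j). 1 \<le> i \<and> i < j \<and> j < length M \<and> cnt 0 i M = i \<and> cnt i j M = j - i
          \<and> cnt j (length M) M = length M - j \<and> Q i (last M) \<and> P (j - i) (last (blk i (length M) M))}"
    then show "(fst (fst p, snd p - fst p), fst (fst p, snd p - fst p) + snd (fst p, snd p - fst p)) = p"
      by auto
  next
    fix p assume "p \<in> {(i,j). 1 \<le> i \<and> i < j \<and> j < length M \<and> cnt 0 i M = i \<and> cnt i j M = j - i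
          \<and> cnt j (length M) M = length M - j \<and> Q i (last M) \<and> P (j - i) (last (blk i (length M) M))}"
    then obtain i j where p: "p = (i,j)" and asm: "1 \<le> i" "i < j" "j < length M" "cnt 0 i M = i"
        "cnt i j M = j - i" "cnt j (length M) M = length M - j" "Q i (last M)" "P (j - i) (last (blk i (length M) M))"
      by blast
    then have "cnt i (length M) M = length M - i" using cnt_comb(2)[OF M(1), of i j] by simp
    then show "(fst p, snd p - fst p) \<in> Sigma JQ B" using asm p by (auto simp: JQ_def B_def n_def)
  next
    fix q assume "q \<in> Sigma JQ B"
    then show "Poly_Mapping.single (blk 0 (fst (fst q, fst q + snd q)) M, blk (fst (fst q, fst q + snd q)) (snd (fst q, fst q + snd q)) M,
           blk (snd (fst q, fst q + snd q)) (length M) M) 1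
        = Poly_Mapping.single (blk 0 (fst q) M, blk (fst q) (fst q + snd q) M, blk (fst q + snd q) n M) (1::'a)"
      by (simp add: n_def)
  qed
  finally show ?thesis .
qed

definition Pp :: "nat \<Rightarrow> nat list \<Rightarrow> bool" where "Pp j s \<longleftrightarrow> (\<forall>e\<in>set (drop j s). e = 0)"
definition Ps :: "nat \<Rightarrow> nat list \<Rightarrow> bool" where "Ps j s \<longleftrightarrow> (\<forall>e\<in>set (take j s). e = 0)"

lemma Pp_nz: "Pp j s \<longleftrightarrow> \<not> nz (drop j s)" by (auto simp: Pp_def nz_def)
lemma Ps_nz: "Ps j s \<longleftrightarrow> \<not> nz (take j s)" by (auto simp: Ps_def nz_def)

lemma Dp_fun: "Delta_prec_b = D Pp"
  by (rule ext) (simp add: Delta_prec_b_def D_def Pp_def)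
lemma Ds_fun: "Delta_succ_b = D Ps"
  by (rule ext) (simp add: Delta_succ_b_def D_def Ps_def)

lemma Delta_prec_eq: "Delta_prec = lext (D Pp)"
  by (simp add: Delta_prec_def Dp_fun)
lemma Delta_succ_eq: "Delta_succ = lext (D Ps)"
  by (simp add: Delta_succ_def Ds_fun)

lemma last_facts:
  assumes "packed k M" "M \<noteq> []"
  shows "nz (last M)" "length (last M) = length M"
  using assms last_in_set[OF assms(2)] unfolding packed_iff by blast+

lemma split_last:
  assumes "packed k N" "N \<noteq> []" "col_dec N j" "1 \<le> j" "j < length N"
  shows "Pp j (last N) \<longleftrightarrow> \<not> Ps j (last N)"
proof -
  have c: "cnt 0 j N = j" "cnt j (length N) N = length N - j" using K3[OF assms(1)] assms(3) by auto
  have "length (filter (\<lambda>r. nz (slice 0 j r) \<and> nz (slice j (length N) r)) N) = 0"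
    using K7[of 0 j "length N" N] K8[OF assms(1)] c assms(5) by simp
  then have "\<not> (nz (slice 0 j (last N)) \<and> nz (slice j (length N) (last N)))"
    using last_in_set[OF assms(2)] by (metis (mono_tags, lifting) filter_empty_conv length_0_conv)
  moreover have "nz (last N)" "length (last N) = length N" using last_facts[OF assms(1,2)] by auto
  moreover have "last N = take j (last N) @ drop j (last N)" by simp
  ultimately show ?thesis unfolding Pp_nz Ps_nz
    by (metis nz_append slice_0 slice_end)
qed

lemma D_union:
  assumes "packed k N" "N \<noteq> []"
  shows "D Pp N + D Ps N = (D (\<lambda>_ _. True) N :: (mat \<times> mat \<Rightarrow>\<^sub>0 'a::field))"
proof -
  let ?g = "\<lambda>j. F2 (cp (lpart j N)) (cp (rpart j N)) :: (mat \<times> mat \<Rightarrow>\<^sub>0 'a)"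
  let ?A = "{j. col_dec N j \<and> 1 \<le> j \<and> j < length N \<and> Pp j (last N)}"
  let ?B = "{j. col_dec N j \<and> 1 \<le> j \<and> j < length N \<and> Ps j (last N)}"
  have fin: "finite ?A" "finite ?B" by (rule finite_subset[of _ "{..<length N}"], auto)+
  have "?A \<inter> ?B = {}" using split_last[OF assms] by blast
  then have "sum ?g ?A + sum ?g ?B = sum ?g (?A \<union> ?B)" by (rule sum.union_disjoint[OF fin, symmetric])
  moreover have "?A \<union> ?B = {j. col_dec N j \<and> 1 \<le> j \<and> j < length N \<and> True}"
    using split_last[OF assms] by blast
  ultimately show ?thesis unfolding D_def by simp
qed

lemma Delta_bar_F0:
  assumes "packed k A" "A \<noteq> []"
  shows "Delta_bar (F A) = (D (\<lambda>_ _. True) A :: (mat \<times> mat \<Rightarrow>\<^sub>0 'a::field))"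
  by (simp add: Delta_bar_def Delta_prec_eq Delta_succ_eq lext_F D_union[OF assms])

lemma Delta_bar_F: "\<forall>A. packed k A \<and> A \<noteq> [] \<longrightarrow> Delta_bar (F A) = (D (\<lambda>_ _. True) A :: (mat \<times> mat \<Rightarrow>\<^sub>0 'a::field))"
  using Delta_bar_F0 by blast

lemma Delta_b_split:
  assumes "packed k M" "M \<noteq> []"
  shows "(Delta_b M :: (mat \<times> mat \<Rightarrow>\<^sub>0 'a::field)) = F2 [] M + D Pp M + D Ps M + F2 M []"
proof -
  let ?n = "length M"
  let ?g = "\<lambda>j. F2 (cp (lpart j M)) (cp (rpart j M)) :: (mat \<times> mat \<Rightarrow>\<^sub>0 'a)"
  let ?J = "{j. col_dec M j \<and> 1 \<le> j \<and> j < length M \<and> True}"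
  have n: "?n \<ge> 1" using assms by (cases M) auto
  have c0: "col_dec M 0" using K3[OF assms(1)] K8[OF assms(1)] by (simp add: cnt_def)
  have cn: "col_dec M ?n" using K3[OF assms(1)] K8[OF assms(1)] by (simp add: cnt_def)
  have set: "{j. col_dec M j} = insert 0 (insert ?n ?J)"
    using c0 cn by (auto simp: col_dec_def)
  have fin: "finite ?J" by (rule finite_subset[of _ "{..<?n}"]) auto
  have "Delta_b M = sum ?g (insert 0 (insert ?n ?J))" unfolding Delta_b_def set ..
  also have "\<dots> = ?g 0 + (?g ?n + sum ?g ?J)"
  proof -
    have h0: "0 \<notin> insert ?n ?J" using n by auto
    have hn: "?n \<notin> ?J" by auto
    have f2: "finite (insert ?n ?J)" using fin by simp
    show ?thesis by (simp only: sum.insert[OF f2 h0] sum.insert[OF fin hn])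
  qed
  also have "?g 0 = F2 [] M" using K1[OF assms(1), of 0] K2[OF assms(1), of 0] blk_full[OF assms(1)] by simp
  also have "?g ?n = F2 M []" using K1[OF assms(1), of ?n] K2[OF assms(1), of ?n] blk_full[OF assms(1)] by simp
  also have "sum ?g ?J = D (\<lambda>_ _. True) M" unfolding D_def ..
  also have "\<dots> = D Pp M + D Ps M" by (rule D_union[OF assms, symmetric])
  finally show ?thesis by (simp add: add.assoc)
qed

lemma drop_split: "i \<le> j \<Longrightarrow> drop i s = drop i (take j s) @ drop j s"
proof -
  assume ij: "i \<le> j"
  have "drop i s = take (j - i) (drop i s) @ drop (j - i) (drop i s)" by (rule append_take_drop_id[symmetric])
  then show ?thesis using ij by (simp add: drop_take)
qed

lemma take_split: "i \<le> j \<Longrightarrow> take j s = take i s @ take (j - i) (drop i s)"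
  by (metis le_add_diff_inverse take_add)

lemma nz_take_if: "nz s \<Longrightarrow> \<not> nz (drop j s) \<Longrightarrow> nz (take j s)"
  by (metis append_take_drop_id nz_append)

lemma nz_drop_if: "nz s \<Longrightarrow> \<not> nz (take j s) \<Longrightarrow> nz (drop j s)"
  by (metis append_take_drop_id nz_append)

lemma last_L:
  assumes "packed k M" "M \<noteq> []" "Pp j (last M)"
  shows "last (blk 0 j M) = take j (last M)"
  using assms last_blk[OF assms(2), of 0 j] last_facts[OF assms(1,2)] nz_take_if
  by (simp add: Pp_nz)

lemma last_R:
  assumes "packed k M" "M \<noteq> []" "Ps i (last M)"
  shows "last (blk i (length M) M) = drop i (last M)"
  using assms last_blk[OF assms(2), of i "length M"] last_facts[OF assms(1,2)] nz_drop_if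
  by (simp add: Ps_nz slice_end)

lemma cond2:
  assumes "packed k M" "M \<noteq> []" "i < j"
  shows "(Pp j (last M) \<and> Pp i (last (blk 0 j M))) \<longleftrightarrow> (Pp i (last M) \<and> True)"
proof -
  have d: "drop i (last M) = drop i (take j (last M)) @ drop j (last M)" by (rule drop_split) (use assms(3) in simp)
  show ?thesis
  proof
    assume a: "Pp j (last M) \<and> Pp i (last (blk 0 j M))"
    then have l: "last (blk 0 j M) = take j (last M)" using last_L[OF assms(1,2)] by blast
    from a have "Pp j (last M)" "Pp i (take j (last M))" unfolding l by auto
    then show "Pp i (last M) \<and> True" using d by (simp add: Pp_nz)
  next
    assume a: "Pp i (last M) \<and> True"
    then have pj: "Pp j (last M)" using d by (simp add: Pp_nz)
    then have l: "last (blk 0 j M) = take j (last M)" using last_L[OF assms(1,2)] by blast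
    have "Pp i (take j (last M))" using a d by (simp add: Pp_nz)
    then show "Pp j (last M) \<and> Pp i (last (blk 0 j M))" using pj l by simp
  qed
qed

lemma cond3:
  assumes "packed k M" "M \<noteq> []" "i < j"
  shows "(Pp j (last M) \<and> Ps i (last (blk 0 j M))) \<longleftrightarrow> (Ps i (last M) \<and> Pp (j - i) (last (blk i (length M) M)))"
proof -
  have t: "take i (take j (last M)) = take i (last M)" using assms(3) by (simp add: min_def)
  have d: "drop (j - i) (drop i (last M)) = drop j (last M)" using assms(3) by simp
  show ?thesis
  proof
    assume a: "Pp j (last M) \<and> Ps i (last (blk 0 j M))"
    then have l: "last (blk 0 j M) = take j (last M)" using last_L[OF assms(1,2)] by blast
    from a have pj: "Pp j (last M)" and "Ps i (take j (last M))" unfolding l by auto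
    then have psi: "Ps i (last M)" using t by (simp add: Ps_nz)
    then have r: "last (blk i (length M) M) = drop i (last M)" using last_R[OF assms(1,2)] by blast
    have "Pp (j - i) (drop i (last M))" using pj d by (simp add: Pp_nz)
    then show "Ps i (last M) \<and> Pp (j - i) (last (blk i (length M) M))" using psi r by simp
  next
    assume a: "Ps i (last M) \<and> Pp (j - i) (last (blk i (length M) M))"
    then have r: "last (blk i (length M) M) = drop i (last M)" using last_R[OF assms(1,2)] by blast
    from a have psi: "Ps i (last M)" and "Pp (j - i) (drop i (last M))" unfolding r by auto
    then have pj: "Pp j (last M)" using d by (simp add: Pp_nz)
    then have l: "last (blk 0 j M) = take j (last M)" using last_L[OF assms(1,2)] by blast
    have "Ps i (take j (last M))" using psi t by (simp add: Ps_nz)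
    then show "Pp j (last M) \<and> Ps i (last (blk 0 j M))" using pj l by simp
  qed
qed

lemma cond4:
  assumes "packed k M" "M \<noteq> []" "i < j"
  shows "(Ps j (last M) \<and> True) \<longleftrightarrow> (Ps i (last M) \<and> Ps (j - i) (last (blk i (length M) M)))"
proof -
  have t: "take j (last M) = take i (last M) @ take (j - i) (drop i (last M))"
    by (rule take_split) (use assms(3) in simp)
  show ?thesis
  proof
    assume a: "Ps j (last M) \<and> True"
    then have psi: "Ps i (last M)" using t by (simp add: Ps_nz)
    then have r: "last (blk i (length M) M) = drop i (last M)" using last_R[OF assms(1,2)] by blast
    have "Ps (j - i) (drop i (last M))" using a t by (simp add: Ps_nz)
    then show "Ps i (last M) \<and> Ps (j - i) (last (blk i (length M) M))" using psi r by simp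
  next
    assume a: "Ps i (last M) \<and> Ps (j - i) (last (blk i (length M) M))"
    then have r: "last (blk i (length M) M) = drop i (last M)" using last_R[OF assms(1,2)] by blast
    from a have "Ps i (last M)" "Ps (j - i) (drop i (last M))" unfolding r by auto
    then show "Ps j (last M) \<and> True" using t by (simp add: Ps_nz)
  qed
qed

lemma f_prec: "\<forall>A. packed k A \<and> A \<noteq> [] \<longrightarrow> Delta_prec (F A) = D Pp A"
  by (simp add: Delta_prec_eq lext_F)
lemma f_succ: "\<forall>A. packed k A \<and> A \<noteq> [] \<longrightarrow> Delta_succ (F A) = D Ps A"
  by (simp add: Delta_succ_eq lext_F)

lemma basis2:
  assumes "packed k M" "M \<noteq> []"
  shows "tensor_I Delta_prec (D Pp M) = (I_tensor Delta_bar (D Pp M) :: (mat \<times> mat \<times> mat \<Rightarrow>\<^sub>0 'a::field))"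
  unfolding tensor_I_D[OF assms f_prec[of k]] I_tensor_D[OF assms Delta_bar_F[of k]]
  by (intro sum.cong refl) (use cond2[OF assms] in auto)

lemma basis3:
  assumes "packed k M" "M \<noteq> []"
  shows "tensor_I Delta_succ (D Pp M) = (I_tensor Delta_prec (D Ps M) :: (mat \<times> mat \<times> mat \<Rightarrow>\<^sub>0 'a::field))"
  unfolding tensor_I_D[OF assms f_succ[of k]] I_tensor_D[OF assms f_prec[of k]]
  by (intro sum.cong refl) (use cond3[OF assms] in auto)

lemma basis4:
  assumes "packed k M" "M \<noteq> []"
  shows "tensor_I Delta_bar (D Ps M) = (I_tensor Delta_succ (D Ps M) :: (mat \<times> mat \<times> mat \<Rightarrow>\<^sub>0 'a::field))"
  unfolding tensor_I_D[OF assms Delta_bar_F[of k]] I_tensor_D[OF assms f_succ[of k]]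
  by (intro sum.cong refl) (use cond4[OF assms] in auto)

lemma tensor_I_comp: "tensor_I f (lext h x) = lext (\<lambda>M. tensor_I f (h M)) x"
  by (simp add: tensor_I_lext lext_lext)
lemma I_tensor_comp: "I_tensor f (lext h x) = lext (\<lambda>M. I_tensor f (h M)) x"
  by (simp add: I_tensor_lext lext_lext)

lemma tens_left: "tens (F []) x = lext (\<lambda>M. F2 [] M) (x :: mat \<Rightarrow>\<^sub>0 'a::field)"
  by (simp add: tens_def F_def F2_def V_as_lext)
lemma tens_right: "tens x (F []) = lext (\<lambda>M. F2 M []) (x :: mat \<Rightarrow>\<^sub>0 'a::field)"
  by (simp add: tens_def F_def F2_def V_as_lext)

theorem proposition2p8:
  fixes k :: nat and x :: "mat \<Rightarrow>\<^sub>0 'a::field"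
  assumes "k \<ge> 1" and "x \<in> PMplus k"
  shows "Delta x = tens (F []) x + Delta_prec x + Delta_succ x + tens x (F [])
       \<and> tensor_I Delta_prec (Delta_prec x) = I_tensor Delta_bar (Delta_prec x)
       \<and> tensor_I Delta_succ (Delta_prec x) = I_tensor Delta_prec (Delta_succ x)
       \<and> tensor_I Delta_bar (Delta_succ x) = I_tensor Delta_succ (Delta_succ x)"
proof -
  have keys: "packed k M" "M \<noteq> []" if "M \<in> Poly_Mapping.keys x" for M
    using assms(2) that by (auto simp: PMplus_def)
  have 1: "Delta x = tens (F []) x + Delta_prec x + Delta_succ x + tens x (F [])"
  proof -
    have "Delta x = lext (\<lambda>M. F2 [] M + D Pp M + D Ps M + F2 M []) x"
      unfolding Delta_def by (rule lext_cong) (rule Delta_b_split[OF keys])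
    also have "\<dots> = lext (\<lambda>M. F2 [] M) x + lext (D Pp) x + lext (D Ps) x + lext (\<lambda>M. F2 M []) x"
      by (simp only: lext_fun_add)
    finally show ?thesis by (simp add: tens_left tens_right Delta_prec_eq Delta_succ_eq)
  qed
  have 2: "tensor_I Delta_prec (Delta_prec x) = I_tensor Delta_bar (Delta_prec x)"
    unfolding Delta_prec_eq tensor_I_comp I_tensor_comp
    unfolding Delta_prec_eq[symmetric]
    by (rule lext_cong) (rule basis2[OF keys])
  have 3: "tensor_I Delta_succ (Delta_prec x) = I_tensor Delta_prec (Delta_succ x)"
    unfolding Delta_prec_eq Delta_succ_eq tensor_I_comp I_tensor_comp
    unfolding Delta_prec_eq[symmetric] Delta_succ_eq[symmetric]
    by (rule lext_cong) (rule basis3[OF keys])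
  have 4: "tensor_I Delta_bar (Delta_succ x) = I_tensor Delta_succ (Delta_succ x)"
    unfolding Delta_succ_eq tensor_I_comp I_tensor_comp
    unfolding Delta_succ_eq[symmetric]
    by (rule lext_cong) (rule basis4[OF keys])
  show ?thesis using 1 2 3 4 by blast
qed

end
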